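(* Let $\theta\ge1$, let $G=(\mu,\mathcal{V},\mathcal{W},\mathcal{E})$ be a $\theta$-maximal weighted bipartite graph with edge density $\delta>0$, and let $\eta\in(0,1]$. Then, for all sets $\mathcal{A}\subseteq\mathcal{V}$ and $\mathcal{B}\subseteq\mathcal{W}$ such that $\mu(\mathcal{A})\leqslant \eta\cdot \mu(\mathcal{V})$ and $\mu(\mathcal{B})\leqslant\eta \cdot \mu(\mathcal{W})$, we have $\mu(\mathcal{E}(\mathcal{A},\mathcal{B}))\leqslant \eta^{2-2/\theta} \cdot \mu(\mathcal{E})$.
   Context: A weighted bipartite graph is $G=(\mu,\mathcal{V},\mathcal{W},\mathcal{E})$ with $\mu:\mathbb{R}_{>0}\to\mathbb{R}_{>0}$, $\mathcal{V},\mathcal{W}$ finite sets of positive reals, $\mathcal{E}\subseteq\mathcal{V}\times\mathcal{W}$. $\mu(\mathcal{T})=\sum_{t\in\mathcal{T}}\mu(t)$ and $\mu(\mathcal{E})=\sum_{(v,w)\in\mathcal{E}}\mu(v)\mu(w)$. Edge density $\delta(G)=\mu(\mathcal{E})/(\mu(\mathcal{V})\mu(\mathcal{W}))$ if $\mathcal{E}\ne\emptyset$, else $0$. For $\theta\ge1$, $\mu^{(\theta)}(G)=\delta(G)^\theta\mu(\mathcal{V})\mu(\mathcal{W})$. A subgraph of $G$ is $(\mu,\mathcal{V}',\mathcal{W}',\mathcal{E}')$ with $\mathcal{V}'\subseteq\mathcal{V}$, $\mathcal{W}'\subseteq\mathcal{W}$, $\mathcal{E}'\subseteq\mathcal{E}\cap(\mathcal{V}'\times\mathcal{W}')$.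 $G$ is $\theta$-maximal if $\mu^{(\theta)}(G)\ge\mu^{(\theta)}(G')$ for every subgraph $G'$. $\mathcal{E}(\mathcal{A},\mathcal{B})=\mathcal{E}\cap(\mathcal{A}\times\mathcal{B})$. *)

theory Defs
  imports "HOL-Analysis.Analysis"
begin

record wbg =
  wmu :: "real \<Rightarrow> real"
  vV  :: "real set"
  vW  :: "real set"
  eE  :: "(real \<times> real) set"

definition wbg_valid :: "wbg \<Rightarrow> bool" where
  "wbg_valid G \<longleftrightarrow> (\<forall>t>0. wmu G t > 0) \<and>
     finite (vV G) \<and> finite (vW G) \<and>
     (\<forall>v\<in>vV G. v > 0) \<and> (\<forall>w\<in>vW G. w > 0) \<and>
     eE G \<subseteq> vV G \<times> vW G"

definition mu_set :: "(real \<Rightarrow> real) \<Rightarrow> real set \<Rightarrow> real" where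
  "mu_set \<mu> T = (\<Sum>t\<in>T. \<mu> t)"

definition mu_edges :: "(real \<Rightarrow> real) \<Rightarrow> (real \<times> real) set \<Rightarrow> real" where
  "mu_edges \<mu> E = (\<Sum>(v,w)\<in>E. \<mu> v * \<mu> w)"

definition density :: "wbg \<Rightarrow> real" where
  "density G = (if eE G = {} then 0
     else mu_edges (wmu G) (eE G) / (mu_set (wmu G) (vV G) * mu_set (wmu G) (vW G)))"

definition mu_theta :: "real \<Rightarrow> wbg \<Rightarrow> real" where
  "mu_theta \<theta> G = density G powr \<theta> * mu_set (wmu G) (vV G) * mu_set (wmu G) (vW G)"

definition is_subgraph :: "wbg \<Rightarrow> wbg \<Rightarrow> bool" where
  "is_subgraph G' G \<longleftrightarrow> wmu G' = wmu G \<and> vV G' \<subseteq> vV G \<and> vW G' \<subseteq> vW G \<and>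
     eE G' \<subseteq> eE G \<inter> (vV G' \<times> vW G')"

definition theta_maximal :: "real \<Rightarrow> wbg \<Rightarrow> bool" where
  "theta_maximal \<theta> G \<longleftrightarrow> (\<forall>G'. is_subgraph G' G \<longrightarrow> mu_theta \<theta> G \<ge> mu_theta \<theta> G')"

definition edges_between :: "wbg \<Rightarrow> real set \<Rightarrow> real set \<Rightarrow> (real \<times> real) set" where
  "edges_between G A B = eE G \<inter> (A \<times> B)"

end

theory Submission
  imports Defs
begin

lemma key_ineq:
  fixes x p q e \<theta> \<eta> :: real
  assumes "x > 0" "p > 0" "q > 0" "e > 0" "\<theta> \<ge> 1" "0 < \<eta>" "p \<le> \<eta>^2 * q"
    and H: "(x/p) powr \<theta> * p \<le> (e/q) powr \<theta> * q"
  shows "x \<le> \<eta> powr (2 - 2 / \<theta>) * e"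
proof -
  define r where "r = p / q"
  have r: "r > 0" "r \<le> \<eta>^2" using assms by (auto simp: r_def field_simps)
  have "(x/p) powr \<theta> \<le> (e/q) powr \<theta> / r"
    using H assms by (simp add: r_def field_simps)
  hence "((x/p) powr \<theta>) powr (1/\<theta>) \<le> ((e/q) powr \<theta> / r) powr (1/\<theta>)"
    using assms by (intro powr_mono2) auto
  also have "((x/p) powr \<theta>) powr (1/\<theta>) = x/p" using assms by (simp add: powr_powr)
  also have "((e/q) powr \<theta> / r) powr (1/\<theta>) = (e/q) * r powr (-1/\<theta>)"
  proof -
    have h1: "((e/q) powr \<theta> / r) powr (1/\<theta>) = ((e/q) powr \<theta>) powr (1/\<theta>) / r powr (1/\<theta>)"
      by (rule powr_divide)
    have h2: "((e/q) powr \<theta>) powr (1/\<theta>) = e/q" using assms by (simp add: powr_powr)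
    have h3: "1 / r powr (1/\<theta>) = r powr (-1/\<theta>)" using r by (simp add: powr_minus_divide)
    show ?thesis unfolding h1 h2 using h3 by (metis times_divide_eq_right mult.right_neutral)
  qed
  finally have "x/p \<le> (e/q) * r powr (-1/\<theta>)" .
  hence "x \<le> p * ((e/q) * r powr (-1/\<theta>))" using assms by (simp add: field_simps)
  also have "\<dots> = e * (r powr 1 * r powr (-1/\<theta>))" using r assms by (simp add: r_def field_simps)
  also have "\<dots> = e * r powr (1 - 1/\<theta>)"
  proof -
    have "r powr (1 + (-1/\<theta>)) = r powr 1 * r powr (-1/\<theta>)" by (rule powr_add)
    moreover have "1 + (-1/\<theta>) = 1 - 1/\<theta>" by simp
    ultimately show ?thesis by metis
  qed
  also have "\<dots> \<le> e * (\<eta>^2) powr (1 - 1/\<theta>)"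
    using assms r by (intro mult_left_mono powr_mono2) auto
  also have "(\<eta>^2) powr (1 - 1/\<theta>) = \<eta> powr (2 - 2/\<theta>)"
  proof -
    have "\<eta>^2 = \<eta> powr 2" using assms by (simp add: powr_numeral)
    hence "(\<eta>^2) powr (1 - 1/\<theta>) = \<eta> powr (2 * (1 - 1/\<theta>))" by (simp add: powr_powr)
    also have "2 * (1 - 1/\<theta>) = 2 - 2/\<theta>" by (simp add: algebra_simps)
    finally show ?thesis .
  qed
  finally show ?thesis by (simp add: mult.commute)
qed

theorem lemma5p12:
  fixes G :: wbg and \<theta> \<eta> :: real and A B :: "real set"
  assumes "wbg_valid G"
    and "\<theta> \<ge> 1"
    and "theta_maximal \<theta> G"
    and "density G > 0"
    and "0 < \<eta>" and "\<eta> \<le> 1"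
    and "A \<subseteq> vV G" and "B \<subseteq> vW G"
    and "mu_set (wmu G) A \<le> \<eta> * mu_set (wmu G) (vV G)"
    and "mu_set (wmu G) B \<le> \<eta> * mu_set (wmu G) (vW G)"
  shows "mu_edges (wmu G) (edges_between G A B) \<le> \<eta> powr (2 - 2 / \<theta>) * mu_edges (wmu G) (eE G)"
proof -
  note v = assms(1)[unfolded wbg_valid_def]
  define \<mu> where "\<mu> = wmu G"
  have mpos: "\<And>t. t \<in> vV G \<union> vW G \<Longrightarrow> \<mu> t > 0" using v by (auto simp: \<mu>_def)
  have fin: "finite (vV G)" "finite (vW G)" using v by auto
  have finE: "finite (eE G)" using v fin by (meson finite_SigmaI finite_subset)
  have Esub: "eE G \<subseteq> vV G \<times> vW G" using v by auto
  have setpos: "mu_set \<mu> S > 0" if "S \<subseteq> vV G \<union> vW G" "S \<noteq> {}" for S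
  proof -
    have "finite S" using that fin by (meson finite_UnI finite_subset)
    thus ?thesis unfolding mu_set_def using that mpos by (intro sum_pos) auto
  qed
  have edgepos: "mu_edges \<mu> F > 0" if "F \<subseteq> eE G" "F \<noteq> {}" for F
  proof -
    have "finite F" using that finE by (meson finite_subset)
    thus ?thesis unfolding mu_edges_def using that mpos Esub
      by (intro sum_pos) (auto intro!: mult_pos_pos)
  qed
  have Ene: "eE G \<noteq> {}" using assms(4) by (auto simp: density_def)
  then obtain v0 w0 where "(v0, w0) \<in> eE G" by auto
  hence VW: "vV G \<noteq> {}" "vW G \<noteq> {}" using Esub by auto
  define e where "e = mu_edges \<mu> (eE G)"
  define N where "N = mu_set \<mu> (vV G)"
  define M where "M = mu_set \<mu> (vW G)"
  have eN: "e > 0" "N > 0" "M > 0" using edgepos[of "eE G"] setpos[of "vV G"] setpos[of "vW G"] Ene VW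
    by (auto simp: e_def N_def M_def)
  define F where "F = edges_between G A B"
  show ?thesis
  proof (cases "F = {}")
    case True
    thus ?thesis using eN by (simp add: F_def mu_edges_def e_def \<mu>_def)
  next
    case False
    have FE: "F \<subseteq> eE G" by (auto simp: F_def edges_between_def)
    have FAB: "F \<subseteq> A \<times> B" by (auto simp: F_def edges_between_def)
    have AB: "A \<noteq> {}" "B \<noteq> {}" using False FAB by auto
    define a where "a = mu_set \<mu> A"
    define b where "b = mu_set \<mu> B"
    define x where "x = mu_edges \<mu> F"
    have pos: "a > 0" "b > 0" "x > 0" using setpos[of A] setpos[of B] edgepos[of F] AB False FE assms(7,8)
      by (auto simp: a_def b_def x_def)
    define G' where "G' = G\<lparr>vV := A, vW := B, eE := F\<rparr>"
    have "is_subgraph G' G" using assms(7,8) FE FAB by (auto simp: G'_def is_subgraph_def)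
    hence "mu_theta \<theta> G' \<le> mu_theta \<theta> G" using assms(3) by (auto simp: theta_maximal_def)
    hence H: "(x/(a*b)) powr \<theta> * (a*b) \<le> (e/(N*M)) powr \<theta> * (N*M)"
      using False Ene by (simp add: mu_theta_def density_def G'_def x_def a_def b_def e_def N_def M_def \<mu>_def mult.assoc)
    have "a*b \<le> (\<eta>*N)*(\<eta>*M)" using assms(9,10) pos
      by (intro mult_mono) (auto simp: a_def b_def N_def M_def \<mu>_def)
    hence "a*b \<le> \<eta>^2 * (N*M)" by (simp add: power2_eq_square algebra_simps)
    from key_ineq[OF pos(3) _ _ eN(1) assms(2) assms(5) this H] pos eN
    show ?thesis by (simp add: x_def F_def e_def \<mu>_def)
  qed
qed

end
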